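(* For every $\varepsilon\in(0,1]$ there exists $b_0$ such that for every $b\geq b_0$ there exists $n_0$ such that for every $n\geq n_0$ the following holds. Let $G$ be an $(n,\varepsilon)$-digraph and let $\mathbf{m}$ be a perfect fractional matching of $G$ with $h(\mathbf{m})\geq n\log\frac n2+\varepsilon n$. Then there is a $b$-normal perfect fractional matching $\mathbf{x}$ of $G$ with $h(\mathbf{x})\geq h(\mathbf{m})-\varepsilon n$.
   Context: $\log=\log_2$. Digraphs have no loops and at most one edge from $v$ to $w$ per ordered pair. An $(n,\varepsilon)$-digraph is a digraph $G$ on $n$ vertices with $\min_v\min\{|N^+(v)|,|N^-(v)|\}\geq(\frac12+\varepsilon)n$. A perfect fractional matching of a digraph $G$ is $\mathbf{x}\colon E(G)\to\mathbb{R}_{\geq0}$ with $\sum_{w\in N^+(v)}\mathbf{x}_{vw}=1=\sum_{w\in N^-(v)}\mathbf{x}_{wv}$ for every vertex $v$. It is $b$-normal if $\frac1{b|V(G)|}\leq\mathbf{x}_e\leq\frac b{|V(G)|}$ for all $e\in E(G)$. Its entropy is $h(\mathbf{x})=\sum_{e\in E(G)}\mathbf{x}_e\log\frac1{\mathbf{x}_e}$. *)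

theory Defs
  imports "HOL-Analysis.Analysis"
begin

definition digraph :: "'a set \<Rightarrow> ('a \<times> 'a) set \<Rightarrow> bool" where
  "digraph V E \<longleftrightarrow> finite V \<and> E \<subseteq> V \<times> V \<and> (\<forall>v. (v, v) \<notin> E)"

definition out_nbrs :: "('a \<times> 'a) set \<Rightarrow> 'a \<Rightarrow> 'a set" where
  "out_nbrs E v = {w. (v, w) \<in> E}"

definition in_nbrs :: "('a \<times> 'a) set \<Rightarrow> 'a \<Rightarrow> 'a set" where
  "in_nbrs E v = {w. (w, v) \<in> E}"

definition n_eps_digraph :: "nat \<Rightarrow> real \<Rightarrow> 'a set \<Rightarrow> ('a \<times> 'a) set \<Rightarrow> bool" where
  "n_eps_digraph n eps V E \<longleftrightarrow> digraph V E \<and> card V = n \<and>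
     (\<forall>v\<in>V. real (card (out_nbrs E v)) \<ge> (1/2 + eps) * real n \<and>
             real (card (in_nbrs E v)) \<ge> (1/2 + eps) * real n)"

text \<open>A perfect fractional matching: a function on the edges (values off E are
irrelevant), nonnegative on E, with all out-sums and in-sums equal to 1.\<close>
definition perfect_frac_matching :: "'a set \<Rightarrow> ('a \<times> 'a) set \<Rightarrow> ('a \<times> 'a \<Rightarrow> real) \<Rightarrow> bool" where
  "perfect_frac_matching V E x \<longleftrightarrow>
     (\<forall>e\<in>E. x e \<ge> 0) \<and>
     (\<forall>v\<in>V. (\<Sum>w\<in>out_nbrs E v. x (v, w)) = 1 \<and> (\<Sum>w\<in>in_nbrs E v. x (w, v)) = 1)"

definition b_normal :: "real \<Rightarrow> 'a set \<Rightarrow> ('a \<times> 'a) set \<Rightarrow> ('a \<times> 'a \<Rightarrow> real) \<Rightarrow> bool" where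
  "b_normal b V E x \<longleftrightarrow>
     (\<forall>e\<in>E. 1 / (b * real (card V)) \<le> x e \<and> x e \<le> b / real (card V))"

definition entropy :: "('a \<times> 'a) set \<Rightarrow> ('a \<times> 'a \<Rightarrow> real) \<Rightarrow> real" where
  "entropy E x = (\<Sum>e\<in>E. if x e = 0 then 0 else x e * log 2 (1 / x e))"

end

theory Submission
  imports Defs "HOL-Real_Asymp.Real_Asymp"
begin


definition T :: "real \<Rightarrow> real" where
  "T z = (if z = 0 then 0 else z * log 2 (1 / z))"

lemma T_alt: "T z = - (z * ln z) / ln 2"
  by (simp add: T_def log_def ln_div)

lemma T_concave:
  assumes "a > 0" "b \<ge> 0"
  shows "T a - T b \<ge> (a - b) * (- (ln a + 1)) / ln 2"
proof -
  have key: "b * ln b - b * ln a \<ge> b - a"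
  proof (cases "b = 0")
    case True then show ?thesis using assms by simp
  next
    case False
    then have bp: "b > 0" using assms by simp
    have "ln (a / b) \<le> a / b - 1" using assms bp by (intro ln_le_minus_one) simp
    then have "ln a - ln b \<le> a / b - 1" using assms bp by (simp add: ln_div)
    then have "b * (ln a - ln b) \<le> b * (a / b - 1)" using bp by (intro mult_left_mono) auto
    then show ?thesis using bp by (simp add: algebra_simps)
  qed
  have l2: "ln (2::real) > 0" by simp
  have "T a - T b = (b * ln b - a * ln a) / ln 2" by (simp add: T_alt diff_divide_distrib)
  moreover have "(a - b) * (- (ln a + 1)) / ln 2 = (b * ln a - a * ln a + b - a) / ln 2"
    by (simp add: algebra_simps)
  ultimately show ?thesis using key l2 by (simp add: divide_right_mono)
qed

lemma T_cont: "continuous_on {0..} T"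
proof -
  have "continuous_on {0..} (\<lambda>z::real. z * ln z)"
    unfolding continuous_on_def
  proof
    fix z :: real assume z: "z \<in> {0..}"
    show "((\<lambda>z. z * ln z) \<longlongrightarrow> z * ln z) (at z within {0..})"
    proof (cases "z = 0")
      case True
      have "((\<lambda>x::real. x * ln x) \<longlongrightarrow> 0) (at_right 0)" by real_asymp
      then show ?thesis using True by (simp add: at_within_Ici_at_right)
    next
      case False
      then have "z > 0" using z by simp
      then have "isCont (\<lambda>z. z * ln z) z" by (auto intro!: continuous_intros)
      then show ?thesis using continuous_at_imp_continuous_at_within[of z "\<lambda>z. z * ln z" "{0..}"] by (simp add: continuous_within)
    qed
  qed
  then have "continuous_on {0..} (\<lambda>z::real. - (z * ln z) / ln 2)"
    by (intro continuous_on_divide continuous_on_minus continuous_on_const) auto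
  moreover have "T = (\<lambda>z. - (z * ln z) / ln 2)" by (rule ext) (simp add: T_alt)
  ultimately show ?thesis by metis
qed

lemma entropy_T: "entropy E x = (\<Sum>e\<in>E. T (x e))"
  by (simp add: entropy_def T_def)

lemma out_nbrsD: "w \<in> out_nbrs E v \<Longrightarrow> (v, w) \<in> E" and in_nbrsD: "w \<in> in_nbrs E v \<Longrightarrow> (w, v) \<in> E"
  by (auto simp: out_nbrs_def in_nbrs_def)

lemma pfm_cong:
  assumes "\<And>e. e \<in> E \<Longrightarrow> y e = z e"
  shows "perfect_frac_matching V E y = perfect_frac_matching V E z"
proof -
  have 1: "(\<Sum>w\<in>out_nbrs E v. y (v, w)) = (\<Sum>w\<in>out_nbrs E v. z (v, w))" for v
    by (rule sum.cong) (auto intro: assms out_nbrsD)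
  have 2: "(\<Sum>w\<in>in_nbrs E v. y (w, v)) = (\<Sum>w\<in>in_nbrs E v. z (w, v))" for v
    by (rule sum.cong) (auto intro: assms in_nbrsD)
  show ?thesis unfolding perfect_frac_matching_def using assms 1 2 by auto
qed

lemma finite_out: "finite E \<Longrightarrow> finite (out_nbrs E v)"
proof -
  assume "finite E"
  moreover have "out_nbrs E v \<subseteq> snd ` E" by (force simp: out_nbrs_def)
  ultimately show ?thesis by (meson finite_imageI finite_subset)
qed

lemma finite_in: "finite E \<Longrightarrow> finite (in_nbrs E v)"
proof -
  assume "finite E"
  moreover have "in_nbrs E v \<subseteq> fst ` E" by (force simp: in_nbrs_def)
  ultimately show ?thesis by (meson finite_imageI finite_subset)
qed

lemma pfm_le1:
  assumes "perfect_frac_matching V E x" "finite E" "E \<subseteq> V \<times> V" "(v, w) \<in> E"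
  shows "x (v, w) \<le> 1"
proof -
  have v: "v \<in> V" using assms by auto
  have w: "w \<in> out_nbrs E v" using assms by (simp add: out_nbrs_def)
  have "x (v, w) \<le> (\<Sum>w'\<in>out_nbrs E v. x (v, w'))"
    using assms(1) w finite_out[OF assms(2)]
    by (intro member_le_sum) (auto simp: perfect_frac_matching_def dest: out_nbrsD)
  also have "\<dots> = 1" using assms(1) v by (simp add: perfect_frac_matching_def)
  finally show ?thesis .
qed

lemma exists_max:
  assumes fin: "finite V" and EV: "E \<subseteq> V \<times> V" and m: "perfect_frac_matching V E m"
  shows "\<exists>x. perfect_frac_matching V E x \<and>
           (\<forall>y. perfect_frac_matching V E y \<longrightarrow> entropy E y \<le> entropy E x)"
proof -
  have finE: "finite E" using fin EV by (meson finite_SigmaI finite_subset)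
  define X where "X = product_topology (\<lambda>_. top_of_set {0..1::real}) E"
  have topX: "topspace X = PiE E (\<lambda>_. {0..1})" by (simp add: X_def)
  have cX: "compactin X (topspace X)"
    unfolding topX X_def by (simp add: compactin_PiE compactin_subtopology)
  have proj0: "continuous_map X (top_of_set {0..1}) (\<lambda>x. x e)" if "e \<in> E" for e
    unfolding X_def by (rule continuous_map_product_projection[OF that])
  have proj: "continuous_map X euclideanreal (\<lambda>x. x e)" if "e \<in> E" for e
    using proj0[OF that] by (simp add: continuous_map_in_subtopology)
  define \<Phi> where "\<Phi> x = (\<Sum>v\<in>V. \<bar>(\<Sum>w\<in>out_nbrs E v. x (v, w)) - 1\<bar> + \<bar>(\<Sum>w\<in>in_nbrs E v. x (w, v)) - 1\<bar>)" for x :: "'a \<times> 'a \<Rightarrow> real"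
  have cPhi: "continuous_map X euclideanreal \<Phi>"
    unfolding \<Phi>_def
  proof (intro continuous_map_sum fin)
    fix v
    have r: "continuous_map X euclideanreal (\<lambda>x. \<Sum>w\<in>out_nbrs E v. x (v, w))"
      by (rule continuous_map_sum[OF finite_out[OF finE]]) (auto intro: proj out_nbrsD)
    have c: "continuous_map X euclideanreal (\<lambda>x. \<Sum>w\<in>in_nbrs E v. x (w, v))"
      by (rule continuous_map_sum[OF finite_in[OF finE]]) (auto intro: proj in_nbrsD)
    show "continuous_map X euclideanreal (\<lambda>x. \<bar>(\<Sum>w\<in>out_nbrs E v. x (v, w)) - 1\<bar> + \<bar>(\<Sum>w\<in>in_nbrs E v. x (w, v)) - 1\<bar>)"
      by (intro continuous_map_add continuous_map_real_abs continuous_map_diff r c continuous_map_const[THEN iffD2]) simp_all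
  qed
  define P where "P = {x \<in> topspace X. \<Phi> x \<in> {0}}"
  have "closedin X P" unfolding P_def
    by (rule closedin_continuous_map_preimage[OF cPhi]) simp
  moreover have "P \<inter> topspace X = P" unfolding P_def by auto
  ultimately have cP: "compactin X P" using closed_Int_compactin[OF _ cX] by metis
  define ent where "ent x = (\<Sum>e\<in>E. T (x e))" for x :: "'a \<times> 'a \<Rightarrow> real"
  have cT: "continuous_map (top_of_set {0..1}) euclideanreal T"
    unfolding continuous_map_iff_continuous by (rule continuous_on_subset[OF T_cont]) auto
  have cent: "continuous_map X euclideanreal ent"
    unfolding ent_def
  proof (intro continuous_map_sum finE)
    fix e assume "e \<in> E"
    from continuous_map_compose[OF proj0[OF this] cT]
    show "continuous_map X euclideanreal (\<lambda>x. T (x e))" by (simp add: o_def)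
  qed
  have "compactin euclideanreal (ent ` P)" by (rule image_compactin[OF cP cent])
  then have cimg: "compact (ent ` P)" by simp
  have PI: "\<Phi> x = 0 \<longleftrightarrow> perfect_frac_matching V E x" if "x \<in> topspace X" for x
  proof -
    have "\<Phi> x = 0 \<longleftrightarrow> (\<forall>v\<in>V. \<bar>(\<Sum>w\<in>out_nbrs E v. x (v, w)) - 1\<bar> + \<bar>(\<Sum>w\<in>in_nbrs E v. x (w, v)) - 1\<bar> = 0)"
      unfolding \<Phi>_def by (rule sum_nonneg_eq_0_iff[OF fin]) auto
    also have "\<dots> \<longleftrightarrow> (\<forall>v\<in>V. (\<Sum>w\<in>out_nbrs E v. x (v, w)) = 1 \<and> (\<Sum>w\<in>in_nbrs E v. x (w, v)) = 1)"
      by (simp add: add_nonneg_eq_0_iff)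
    also have "\<dots> \<longleftrightarrow> perfect_frac_matching V E x"
      using that unfolding topX perfect_frac_matching_def by (auto simp: PiE_iff)
    finally show ?thesis .
  qed
  have restr: "restrict y E \<in> P" if "perfect_frac_matching V E y" for y
  proof -
    have py: "perfect_frac_matching V E (restrict y E)"
      using that pfm_cong[of E "restrict y E" y V] by simp
    have "restrict y E \<in> topspace X" unfolding topX
      using that pfm_le1[OF that finE EV] by (auto simp: perfect_frac_matching_def)
    then show ?thesis using PI py unfolding P_def by auto
  qed
  have entr: "ent (restrict y E) = entropy E y" for y
    unfolding ent_def entropy_T by (rule sum.cong) auto
  have "ent ` P \<noteq> {}" using restr[OF m] by auto
  from compact_attains_sup[OF cimg this] obtain x where xP: "x \<in> P" and xmax: "\<forall>t\<in>ent ` P. t \<le> ent x"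
    by auto
  have px: "perfect_frac_matching V E x" using xP PI unfolding P_def by auto
  show ?thesis
  proof (intro exI conjI allI impI)
    show "perfect_frac_matching V E x" by (rule px)
    fix y assume "perfect_frac_matching V E y"
    then have "ent (restrict y E) \<le> ent x" using xmax restr by auto
    then show "entropy E y \<le> entropy E x" using entr[of y] entr[of x] px
      by (metis ent_def entropy_T)
  qed
qed



definition ind :: "'a \<times> 'a \<Rightarrow> 'a \<times> 'a \<Rightarrow> real" where
  "ind p e = (if e = p then 1 else 0)"

lemma sum_ind: "finite E \<Longrightarrow> p \<in> E \<Longrightarrow> (\<Sum>e\<in>E. ind p e * g e) = g p"
proof -
  assume a: "finite E" "p \<in> E"
  have "(\<Sum>e\<in>E. ind p e * g e) = (\<Sum>e\<in>E. if p = e then g p else 0)"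
    by (rule sum.cong) (auto simp: ind_def)
  also have "\<dots> = g p" using a by simp
  finally show ?thesis .
qed

lemma sum_ind2: "finite E \<Longrightarrow> p \<in> E \<Longrightarrow> (\<Sum>e\<in>E. g e * ind p e) = g p"
  using sum_ind[of E p g] by (simp add: mult.commute)

lemma sum_ind_out: "finite E \<Longrightarrow> (a, c) \<in> E \<Longrightarrow>
   (\<Sum>w'\<in>out_nbrs E v. ind (a, c) (v, w')) = (if v = a then 1 else 0)"
  unfolding ind_def using finite_out[of E v] by (auto simp: out_nbrs_def)

lemma sum_ind_in: "finite E \<Longrightarrow> (a, c) \<in> E \<Longrightarrow>
   (\<Sum>w'\<in>in_nbrs E v. ind (a, c) (w', v)) = (if v = c then 1 else 0)"
  unfolding ind_def using finite_in[of E v] by (auto simp: in_nbrs_def)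

lemma opt6:
  fixes x :: "'a \<times> 'a \<Rightarrow> real"
  assumes finE: "finite E"
    and px: "perfect_frac_matching V E x"
    and xmax: "\<And>y. perfect_frac_matching V E y \<Longrightarrow> entropy E y \<le> entropy E x"
    and e1: "(v1, w) \<in> E" and e2: "(u, w) \<in> E" and e3: "(u, b) \<in> E"
    and e4: "(t, b) \<in> E" and e5: "(t, c) \<in> E" and e6: "(v1, c) \<in> E"
    and p1: "x (u, w) > 0" and p2: "x (t, b) > 0" and p3: "x (v1, c) > 0"
  shows "x (u, w) * x (t, b) * x (v1, c) \<le> x (v1, w) * x (u, b) * x (t, c)"
proof -
  define D where "D e = ind (v1, w) e + ind (u, b) e + ind (t, c) e - ind (u, w) e - ind (t, b) e - ind (v1, c) e" for e
  define Q where "Q = {(u, w), (t, b), (v1, c)}"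
  define m0 where "m0 = min (x (u, w)) (min (x (t, b)) (x (v1, c)))"
  have m0: "m0 > 0" using p1 p2 p3 by (simp add: m0_def)
  have xQ: "e \<in> Q \<Longrightarrow> x e \<ge> m0" for e by (auto simp: Q_def m0_def)
  have Dge: "D e \<ge> -3" for e by (simp add: D_def ind_def)
  have DnQ: "e \<notin> Q \<Longrightarrow> D e \<ge> 0" for e by (auto simp: D_def ind_def Q_def)
  have DE: "D e \<noteq> 0 \<Longrightarrow> e \<in> E" for e
    using e1 e2 e3 e4 e5 e6
    by (cases "e \<in> {(v1, w), (u, b), (t, c), (u, w), (t, b), (v1, c)}") (auto simp: D_def ind_def)
  have xnn: "e \<in> E \<Longrightarrow> x e \<ge> 0" for e using px by (auto simp: perfect_frac_matching_def)
  have Dp: "e \<in> {(v1, w), (u, b), (t, c)} \<Longrightarrow> e \<notin> Q \<Longrightarrow> D e \<ge> 1" for e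
    by (auto simp: D_def ind_def Q_def)
  have rowD: "(\<Sum>w'\<in>out_nbrs E v. D (v, w')) = 0" for v
    unfolding D_def using e1 e2 e3 e4 e5 e6
    by (simp add: sum.distrib sum_subtractf sum_ind_out[OF finE])
  have colD: "(\<Sum>w'\<in>in_nbrs E v. D (w', v)) = 0" for v
    unfolding D_def using e1 e2 e3 e4 e5 e6
    by (simp add: sum.distrib sum_subtractf sum_ind_in[OF finE])
  have sumD: "(\<Sum>e\<in>E. D e * g e) = g (v1, w) + g (u, b) + g (t, c) - g (u, w) - g (t, b) - g (v1, c)" for g
    unfolding D_def using e1 e2 e3 e4 e5 e6
    by (simp add: algebra_simps sum.distrib sum_subtractf sum_ind2[OF finE])
  define y where "y s e = x e + s * D e" for s e
  have yQ: "y s e > 0" if "e \<in> Q" "0 < s" "3 * s < m0" for s e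
  proof -
    have "s * D e \<ge> s * (-3)" using Dge[of e] that by (intro mult_left_mono) auto
    then show ?thesis using xQ[OF that(1)] that by (simp add: y_def)
  qed
  have ypos: "y s e > 0" if "D e \<noteq> 0" "0 < s" "3 * s < m0" for s e
  proof (cases "e \<in> Q")
    case True then show ?thesis using yQ that by blast
  next
    case False
    then have "D e > 0" using DnQ[of e] that by simp
    then have "s * D e > 0" using that by simp
    then show ?thesis using xnn[OF DE[OF that(1)]] by (simp add: y_def)
  qed
  have y6: "y s e > 0" if "e \<in> {(v1, w), (u, b), (t, c), (u, w), (t, b), (v1, c)}" "0 < s" "3 * s < m0" for s e
  proof (cases "e \<in> Q")
    case True then show ?thesis using yQ that by blast
  next
    case False
    then have "e \<in> {(v1, w), (u, b), (t, c)}" using that(1) by (auto simp: Q_def)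
    then have "D e \<ge> 1" using Dp False by blast
    then show ?thesis using ypos that by force
  qed
  have ypfm: "perfect_frac_matching V E (y s)" if s: "0 < s" "3 * s < m0" for s
    unfolding perfect_frac_matching_def
  proof (intro conjI ballI)
    fix e assume "e \<in> E"
    show "0 \<le> y s e"
    proof (cases "D e = 0")
      case True then show ?thesis using xnn[OF \<open>e \<in> E\<close>] by (simp add: y_def)
    next
      case False then show ?thesis using ypos[OF False s] by simp
    qed
  next
    fix v assume "v \<in> V"
    then have r: "(\<Sum>w\<in>out_nbrs E v. x (v, w)) = 1" and c: "(\<Sum>w\<in>in_nbrs E v. x (w, v)) = 1"
      using px by (auto simp: perfect_frac_matching_def)
    show "(\<Sum>w\<in>out_nbrs E v. y s (v, w)) = 1"
      using r rowD[of v] by (simp add: y_def sum.distrib sum_distrib_left[symmetric])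
    show "(\<Sum>w\<in>in_nbrs E v. y s (w, v)) = 1"
      using c colD[of v] by (simp add: y_def sum.distrib sum_distrib_left[symmetric])
  qed
  have key: "y s (u, w) * y s (t, b) * y s (v1, c) \<le> y s (v1, w) * y s (u, b) * y s (t, c)"
    if s: "0 < s" "3 * s < m0" for s
  proof -
    have l2: "ln (2::real) > 0" by simp
    have trm: "s * D e * (- (ln (y s e) + 1)) / ln 2 \<le> T (y s e) - T (x e)" if "e \<in> E" for e
    proof (cases "D e = 0")
      case True then show ?thesis by (simp add: y_def)
    next
      case False
      have "(y s e - x e) * (- (ln (y s e) + 1)) / ln 2 \<le> T (y s e) - T (x e)"
        by (rule T_concave[OF ypos[OF False s] xnn[OF that]])
      then show ?thesis by (simp add: y_def)
    qed
    have "(\<Sum>e\<in>E. s * D e * (- (ln (y s e) + 1)) / ln 2) \<le> (\<Sum>e\<in>E. T (y s e) - T (x e))"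
      by (rule sum_mono) (rule trm)
    also have "\<dots> = entropy E (y s) - entropy E x" by (simp add: entropy_T sum_subtractf)
    also have "\<dots> \<le> 0" using xmax[OF ypfm[OF s]] by simp
    finally have A: "(\<Sum>e\<in>E. s * D e * (- (ln (y s e) + 1)) / ln 2) \<le> 0" .
    have "(\<Sum>e\<in>E. s * D e * (- (ln (y s e) + 1)) / ln 2) = - (s / ln 2) * (\<Sum>e\<in>E. D e * (ln (y s e) + 1))"
    proof -
      have "(\<Sum>e\<in>E. s * D e * (- (ln (y s e) + 1)) / ln 2) = (\<Sum>e\<in>E. - (s / ln 2) * (D e * (ln (y s e) + 1)))"
        by (rule sum.cong) (auto simp: field_simps)
      also have "\<dots> = - (s / ln 2) * (\<Sum>e\<in>E. D e * (ln (y s e) + 1))"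
        by (rule sum_distrib_left[symmetric])
      finally show ?thesis .
    qed
    with A have "(\<Sum>e\<in>E. D e * (ln (y s e) + 1)) \<ge> 0"
      using s l2 by (simp add: zero_le_divide_iff zero_le_mult_iff)
    then have B: "ln (y s (u, w)) + ln (y s (t, b)) + ln (y s (v1, c)) \<le> ln (y s (v1, w)) + ln (y s (u, b)) + ln (y s (t, c))"
      by (simp add: sumD)
    have pos: "y s (v1, w) > 0" "y s (u, b) > 0" "y s (t, c) > 0" "y s (u, w) > 0" "y s (t, b) > 0" "y s (v1, c) > 0"
      using y6 s by auto
    have "ln (y s (u, w) * y s (t, b) * y s (v1, c)) \<le> ln (y s (v1, w) * y s (u, b) * y s (t, c))"
      using B pos by (simp add: ln_mult)
    then show ?thesis using pos by simp
  qed
  define F where "F s = y s (v1, w) * y s (u, b) * y s (t, c) - y s (u, w) * y s (t, b) * y s (v1, c)" for s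
  have "(F \<longlongrightarrow> F 0) (at_right 0)"
    unfolding F_def y_def by (intro tendsto_intros)
  moreover have "eventually (\<lambda>s. 0 \<le> F s) (at_right 0)"
    unfolding eventually_at_right_field
    by (rule exI[of _ "m0 / 3"]) (use m0 key in \<open>auto simp: F_def\<close>)
  ultimately have "0 \<le> F 0" by (rule tendsto_lowerbound) simp
  then show ?thesis by (simp add: F_def y_def)
qed



lemma count_lemma:
  fixes f :: "'a \<Rightarrow> real"
  assumes fin: "finite V" and n: "card V = n" "n > 0" and eps: "0 < eps" "eps < 1"
    and le1: "\<And>t. t \<in> V \<Longrightarrow> f t \<le> 1"
    and sum: "(1/2 + eps) * real n \<le> (\<Sum>t\<in>V. f t)"
  shows "real n < 2 * real (card {t\<in>V. eps \<le> f t})"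
proof -
  define K where "K = {t\<in>V. eps \<le> f t}"
  have KV: "K \<subseteq> V" by (auto simp: K_def)
  have finK: "finite K" using fin KV finite_subset by blast
  have "(\<Sum>t\<in>V. f t) = (\<Sum>t\<in>K. f t) + (\<Sum>t\<in>V - K. f t)"
    using fin KV by (metis sum.subset_diff add.commute)
  also have "(\<Sum>t\<in>K. f t) \<le> (\<Sum>t\<in>K. 1)" using KV le1 by (intro sum_mono) auto
  also have "(\<Sum>t\<in>V - K. f t) \<le> (\<Sum>t\<in>V - K. eps)" by (intro sum_mono) (auto simp: K_def)
  finally have A: "(1/2 + eps) * real n \<le> real (card K) + eps * real (card (V - K))"
    using sum by (simp add: mult.commute)
  have "card (V - K) = n - card K" using card_Diff_subset[OF finK KV] n by simp
  moreover have "card K \<le> n" using card_mono[OF fin KV] n by simp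
  ultimately have B: "real (card (V - K)) = real n - real (card K)" by simp
  have C: "real n / 2 + eps * real (card K) \<le> real (card K)" using A B by (simp add: algebra_simps)
  show ?thesis
  proof (rule ccontr)
    assume "\<not> ?thesis"
    then have "2 * real (card K) \<le> real n" by (simp add: K_def)
    with C have "eps * real (card K) \<le> 0" by simp
    then have "card K = 0" using eps by (simp add: mult_le_0_iff)
    then show False using C n by simp
  qed
qed

lemma opt6':
  fixes x :: "'a \<times> 'a \<Rightarrow> real"
  assumes finE: "finite E"
    and px: "perfect_frac_matching V E x"
    and xmax: "\<And>y. perfect_frac_matching V E y \<Longrightarrow> entropy E y \<le> entropy E x"
    and e1: "(v1, w) \<in> E" and e2: "(u, w) \<in> E" and e3: "(u, b) \<in> E"
    and e4: "(t, b) \<in> E" and e5: "(t, c) \<in> E" and e6: "(v1, c) \<in> E"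
  shows "x (u, w) * x (t, b) * x (v1, c) \<le> x (v1, w) * x (u, b) * x (t, c)"
proof -
  have nn: "e \<in> E \<Longrightarrow> x e \<ge> 0" for e using px by (auto simp: perfect_frac_matching_def)
  show ?thesis
  proof (cases "x (u, w) > 0 \<and> x (t, b) > 0 \<and> x (v1, c) > 0")
    case True then show ?thesis using opt6[OF finE px xmax e1 e2 e3 e4 e5 e6] by blast
  next
    case False
    then have "x (u, w) * x (t, b) * x (v1, c) = 0" using nn e2 e4 e6 by force
    moreover have "0 \<le> x (v1, w) * x (u, b) * x (t, c)" using nn e1 e3 e5 by simp
    ultimately show ?thesis by linarith
  qed
qed

lemma col_pos:
  fixes x :: "'a \<times> 'a \<Rightarrow> real"
  assumes px: "perfect_frac_matching V E x" and "d \<in> V"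
  shows "\<exists>t\<in>in_nbrs E d. x (t, d) > 0"
proof (rule ccontr)
  assume "\<not> ?thesis"
  then have "\<forall>t\<in>in_nbrs E d. x (t, d) \<le> 0" by auto
  then have "(\<Sum>t\<in>in_nbrs E d. x (t, d)) \<le> 0" by (intro sum_nonpos) auto
  then show False using px assms(2) by (auto simp: perfect_frac_matching_def)
qed

lemma opt4:
  fixes x :: "'a \<times> 'a \<Rightarrow> real"
  assumes finE: "finite E" and EV: "E \<subseteq> V \<times> V"
    and px: "perfect_frac_matching V E x"
    and xmax: "\<And>y. perfect_frac_matching V E y \<Longrightarrow> entropy E y \<le> entropy E x"
    and e1: "(a, b) \<in> E" and e2: "(c, b) \<in> E" and e3: "(c, d) \<in> E" and e4: "(a, d) \<in> E"
  shows "x (c, b) * x (a, d) \<le> x (a, b) * x (c, d)"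
proof -
  have "d \<in> V" using e3 EV by auto
  then obtain t where t: "t \<in> in_nbrs E d" "x (t, d) > 0" using col_pos[OF px] by blast
  have te: "(t, d) \<in> E" using t(1) by (simp add: in_nbrs_def)
  have "x (c, b) * x (t, d) * x (a, d) \<le> x (a, b) * x (c, d) * x (t, d)"
    by (rule opt6'[OF finE px xmax e1 e2 e3 te te e4])
  then have "(x (c, b) * x (a, d)) * x (t, d) \<le> (x (a, b) * x (c, d)) * x (t, d)"
    by (simp add: algebra_simps)
  then show ?thesis using t(2) by simp
qed

lemma out_filter: "E \<subseteq> V \<times> V \<Longrightarrow> out_nbrs E v = {w\<in>V. (v, w) \<in> E}"
  by (auto simp: out_nbrs_def)

lemma in_filter: "E \<subseteq> V \<times> V \<Longrightarrow> in_nbrs E v = {w\<in>V. (w, v) \<in> E}"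
  by (auto simp: in_nbrs_def)

lemma double_count:
  assumes fin: "finite V" and EV: "E \<subseteq> V \<times> V"
  shows "(\<Sum>v\<in>V. \<Sum>w\<in>out_nbrs E v. f v w) = (\<Sum>w\<in>V. \<Sum>v\<in>in_nbrs E w. f v w)"
proof -
  have "(\<Sum>v\<in>V. \<Sum>w\<in>out_nbrs E v. f v w) = (\<Sum>v\<in>V. \<Sum>w\<in>V. if (v, w) \<in> E then f v w else 0)"
    unfolding out_filter[OF EV] using fin by (simp add: sum.inter_filter)
  also have "\<dots> = (\<Sum>w\<in>V. \<Sum>v\<in>V. if (v, w) \<in> E then f v w else 0)" by (rule sum.swap)
  also have "\<dots> = (\<Sum>w\<in>V. \<Sum>v\<in>in_nbrs E w. f v w)"
    unfolding in_filter[OF EV] using fin by (simp add: sum.inter_filter)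
  finally show ?thesis .
qed

lemma row_part_le1:
  fixes x :: "'a \<times> 'a \<Rightarrow> real"
  assumes px: "perfect_frac_matching V E x" and finE: "finite E" and t: "t \<in> V" and S: "finite S"
  shows "(\<Sum>c\<in>S. if c \<in> out_nbrs E t then x (t, c) else 0) \<le> 1"
proof -
  have "(\<Sum>c\<in>S. if c \<in> out_nbrs E t then x (t, c) else 0) = (\<Sum>c\<in>S \<inter> out_nbrs E t. x (t, c))"
    using S by (simp add: sum.inter_restrict)
  also have "\<dots> \<le> (\<Sum>c\<in>out_nbrs E t. x (t, c))"
    using px finite_out[OF finE]
    by (intro sum_mono2) (auto simp: perfect_frac_matching_def out_nbrs_def)
  also have "\<dots> = 1" using px t by (simp add: perfect_frac_matching_def)
  finally show ?thesis .
qed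



lemma sum_if_mult: "a * (\<Sum>c\<in>S. if P c then h c else 0) = (\<Sum>c\<in>S. if P c then a * h c else (0::real))"
  by (auto simp: sum_distrib_left intro: sum.cong)

context
  fixes n :: nat and eps :: real and V :: "'a set" and E and x :: "'a \<times> 'a \<Rightarrow> real"
  assumes G: "n_eps_digraph n eps V E" and eps: "0 < eps" "eps < 1/2"
    and px: "perfect_frac_matching V E x"
    and xmax: "\<And>y. perfect_frac_matching V E y \<Longrightarrow> entropy E y \<le> entropy E x"
begin

lemma finV: "finite V" and EV: "E \<subseteq> V \<times> V" and cardV: "card V = n"
  using G by (auto simp: n_eps_digraph_def digraph_def)

lemma finE: "finite E" using finV EV by (meson finite_SigmaI finite_subset)

lemma degs: "v \<in> V \<Longrightarrow> (1/2 + eps) * real n \<le> real (card (out_nbrs E v))"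
  "v \<in> V \<Longrightarrow> (1/2 + eps) * real n \<le> real (card (in_nbrs E v))"
  using G by (auto simp: n_eps_digraph_def)

lemma outV: "out_nbrs E v \<subseteq> V" and inV: "in_nbrs E v \<subseteq> V"
  using EV by (auto simp: out_nbrs_def in_nbrs_def)

lemma xnn: "e \<in> E \<Longrightarrow> 0 \<le> x e" using px by (auto simp: perfect_frac_matching_def)

lemma rows: "v \<in> V \<Longrightarrow> (\<Sum>w\<in>out_nbrs E v. x (v, w)) = 1"
  and cols: "v \<in> V \<Longrightarrow> (\<Sum>w\<in>in_nbrs E v. x (w, v)) = 1"
  using px by (auto simp: perfect_frac_matching_def)

lemma npos: "(v, w) \<in> E \<Longrightarrow> n > 0"
  using EV finV cardV by (metis card_gt_0_iff empty_iff gr0I mem_Sigma_iff subsetD)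

lemma upper:
  assumes vw: "(v, w) \<in> E"
  shows "x (v, w) \<le> 1 / (2 * eps * real n)"
proof -
  have vV: "v \<in> V" and wV: "w \<in> V" using vw EV by auto
  have n0: "n > 0" by (rule npos[OF vw])
  define M where "M v' = (\<Sum>w'\<in>out_nbrs E v'. if w' \<in> out_nbrs E v then x (v', w') else 0)" for v'
  define N where "N v' = (\<Sum>w'\<in>out_nbrs E v'. if w' \<notin> out_nbrs E v then x (v', w') else 0)" for v'
  have MN: "M v' = 1 - N v'" if "v' \<in> V" for v'
  proof -
    have "M v' + N v' = (\<Sum>w'\<in>out_nbrs E v'. x (v', w'))"
      unfolding M_def N_def sum.distrib[symmetric] by (rule sum.cong) auto
    then show ?thesis using rows[OF that] by simp
  qed
  have N0: "N v' \<ge> 0" for v'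
    unfolding N_def by (intro sum_nonneg) (auto intro: xnn simp: out_nbrs_def)
  have "(\<Sum>v'\<in>V. N v') = (\<Sum>w'\<in>V. \<Sum>v'\<in>in_nbrs E w'. if w' \<notin> out_nbrs E v then x (v', w') else 0)"
    unfolding N_def by (rule double_count[OF finV EV])
  also have "\<dots> = (\<Sum>w'\<in>V. if w' \<notin> out_nbrs E v then 1 else 0)"
    by (rule sum.cong) (auto simp: cols)
  also have "\<dots> = real (card {w'\<in>V. w' \<notin> out_nbrs E v})"
    using finV by (simp add: sum.inter_filter[symmetric])
  also have "{w'\<in>V. w' \<notin> out_nbrs E v} = V - out_nbrs E v" by auto
  finally have sumN: "(\<Sum>v'\<in>V. N v') = real (card (V - out_nbrs E v))" .
  have "card (V - out_nbrs E v) = n - card (out_nbrs E v)"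
    using card_Diff_subset[OF finite_subset[OF outV finV] outV] cardV by simp
  moreover have "card (out_nbrs E v) \<le> n" using card_mono[OF finV outV] cardV by simp
  ultimately have cd: "real (card (V - out_nbrs E v)) = real n - real (card (out_nbrs E v))" by simp
  have "(\<Sum>v'\<in>in_nbrs E w. N v') \<le> (\<Sum>v'\<in>V. N v')"
    by (rule sum_mono2[OF finV inV]) (simp add: N0)
  then have sN: "(\<Sum>v'\<in>in_nbrs E w. N v') \<le> real n - (1/2 + eps) * real n"
    using sumN cd degs(1)[OF vV] by linarith
  have "(\<Sum>v'\<in>in_nbrs E w. M v') = (\<Sum>v'\<in>in_nbrs E w. 1 - N v')"
    by (rule sum.cong) (use inV MN in auto)
  also have "\<dots> = real (card (in_nbrs E w)) - (\<Sum>v'\<in>in_nbrs E w. N v')"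
    by (simp add: sum_subtractf)
  finally have sM: "2 * eps * real n \<le> (\<Sum>v'\<in>in_nbrs E w. M v')"
    using sN degs(2)[OF wV] by (simp add: algebra_simps)
  have c1: "x (v, w) * M v' \<le> x (v', w)" if v': "v' \<in> in_nbrs E w" for v'
  proof -
    have v'E: "(v', w) \<in> E" using v' by (simp add: in_nbrs_def)
    have v'V: "v' \<in> V" using v' inV by auto
    have "x (v, w) * M v' = (\<Sum>w'\<in>out_nbrs E v'. if w' \<in> out_nbrs E v then x (v, w) * x (v', w') else 0)"
      unfolding M_def by (rule sum_if_mult)
    also have "\<dots> \<le> (\<Sum>w'\<in>out_nbrs E v'. if w' \<in> out_nbrs E v then x (v', w) * x (v, w') else 0)"
    proof (rule sum_mono)
      fix w' assume w': "w' \<in> out_nbrs E v'"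
      show "(if w' \<in> out_nbrs E v then x (v, w) * x (v', w') else 0) \<le> (if w' \<in> out_nbrs E v then x (v', w) * x (v, w') else 0)"
      proof (cases "w' \<in> out_nbrs E v")
        case True
        have "x (v', w') * x (v, w) \<le> x (v, w') * x (v', w)"
          by (rule opt4[OF finE EV px xmax]) (use True w' v'E vw in \<open>auto simp: out_nbrs_def\<close>)
        then show ?thesis using True by (simp add: mult.commute)
      qed simp
    qed
    also have "\<dots> = x (v', w) * (\<Sum>w'\<in>out_nbrs E v'. if w' \<in> out_nbrs E v then x (v, w') else 0)"
      by (rule sum_if_mult[symmetric])
    also have "\<dots> \<le> x (v', w) * 1"
      by (rule mult_left_mono[OF row_part_le1[OF px finE vV finite_out[OF finE]] xnn[OF v'E]])
    finally show ?thesis by simp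
  qed
  have "x (v, w) * (\<Sum>v'\<in>in_nbrs E w. M v') = (\<Sum>v'\<in>in_nbrs E w. x (v, w) * M v')"
    by (simp add: sum_distrib_left)
  also have "\<dots> \<le> (\<Sum>v'\<in>in_nbrs E w. x (v', w))" by (rule sum_mono) (rule c1)
  also have "\<dots> = 1" by (rule cols[OF wV])
  finally have "x (v, w) * (\<Sum>v'\<in>in_nbrs E w. M v') \<le> 1" .
  moreover have "x (v, w) * (2 * eps * real n) \<le> x (v, w) * (\<Sum>v'\<in>in_nbrs E w. M v')"
    by (rule mult_left_mono[OF sM xnn[OF vw]])
  ultimately have "x (v, w) * (2 * eps * real n) \<le> 1" by linarith
  moreover have "2 * eps * real n > 0" using eps n0 by simp
  ultimately show ?thesis by (simp add: pos_le_divide_eq)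
qed

lemma lower:
  assumes vw: "(v1, w) \<in> E"
  shows "eps ^ 2 / real n \<le> x (v1, w)"
proof -
  have v1V: "v1 \<in> V" and wV: "w \<in> V" using vw EV by auto
  have n0: "n > 0" by (rule npos[OF vw])
  have "\<exists>u\<in>in_nbrs E w. 1 / real n \<le> x (u, w)"
  proof (rule ccontr)
    assume "\<not> ?thesis"
    then have lt: "\<forall>u\<in>in_nbrs E w. x (u, w) < 1 / real n" by auto
    have ne: "in_nbrs E w \<noteq> {}" using vw by (auto simp: in_nbrs_def)
    have "(\<Sum>u\<in>in_nbrs E w. x (u, w)) < (\<Sum>u\<in>in_nbrs E w. 1 / real n)"
      by (rule sum_strict_mono[OF finite_in[OF finE] ne]) (use lt in auto)
    also have "\<dots> = real (card (in_nbrs E w)) / real n" by simp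
    also have "\<dots> \<le> 1" using card_mono[OF finV inV] cardV n0 by simp
    finally show False using cols[OF wV] by simp
  qed
  then obtain u where u: "u \<in> in_nbrs E w" and xu: "1 / real n \<le> x (u, w)" by blast
  have uE: "(u, w) \<in> E" using u by (simp add: in_nbrs_def)
  have uV: "u \<in> V" using uE EV by auto
  define f where "f t = (\<Sum>c\<in>out_nbrs E v1. if c \<in> out_nbrs E t then x (v1, c) else 0)" for t
  define g where "g t = (\<Sum>b\<in>out_nbrs E u. if b \<in> out_nbrs E t then x (t, b) else 0)" for t
  have f1: "f t \<le> 1" for t
  proof -
    have "f t \<le> (\<Sum>c\<in>out_nbrs E v1. x (v1, c))"
      unfolding f_def by (rule sum_mono) (auto intro: xnn simp: out_nbrs_def)
    then show ?thesis using rows[OF v1V] by simp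
  qed
  have g1: "t \<in> V \<Longrightarrow> g t \<le> 1" for t
    unfolding g_def by (rule row_part_le1[OF px finE _ finite_out[OF finE]])
  have f0: "f t \<ge> 0" for t
    unfolding f_def by (rule sum_nonneg) (auto intro: xnn simp: out_nbrs_def)
  have g0: "g t \<ge> 0" for t
    unfolding g_def by (rule sum_nonneg) (auto intro: xnn simp: out_nbrs_def)
  have incard: "(\<Sum>t\<in>V. if c \<in> out_nbrs E t then a else 0) = a * real (card (in_nbrs E c))" for c and a :: real
  proof -
    have "(\<Sum>t\<in>V. if c \<in> out_nbrs E t then a else 0) = (\<Sum>t\<in>{t\<in>V. c \<in> out_nbrs E t}. a)"
      using sum.inter_filter[OF finV, of "\<lambda>_. a" "\<lambda>t. c \<in> out_nbrs E t"] by simp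
    also have "{t\<in>V. c \<in> out_nbrs E t} = in_nbrs E c" using EV by (auto simp: out_nbrs_def in_nbrs_def)
    finally show ?thesis by simp
  qed
  have "(\<Sum>t\<in>V. f t) = (\<Sum>c\<in>out_nbrs E v1. \<Sum>t\<in>V. if c \<in> out_nbrs E t then x (v1, c) else 0)"
    unfolding f_def by (rule sum.swap)
  also have "\<dots> = (\<Sum>c\<in>out_nbrs E v1. x (v1, c) * real (card (in_nbrs E c)))"
    by (simp add: incard)
  also have "\<dots> \<ge> (\<Sum>c\<in>out_nbrs E v1. x (v1, c) * ((1/2 + eps) * real n))"
    by (rule sum_mono, rule mult_left_mono) (use outV degs(2) in \<open>auto intro: xnn simp: out_nbrs_def\<close>)
  moreover have "(\<Sum>c\<in>out_nbrs E v1. x (v1, c) * ((1/2 + eps) * real n)) = (1/2 + eps) * real n"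
    using rows[OF v1V] by (simp add: sum_distrib_right[symmetric])
  ultimately have sf: "(1/2 + eps) * real n \<le> (\<Sum>t\<in>V. f t)" by linarith
  have "(\<Sum>t\<in>V. g t) = (\<Sum>b\<in>out_nbrs E u. \<Sum>t\<in>V. if b \<in> out_nbrs E t then x (t, b) else 0)"
    unfolding g_def by (rule sum.swap)
  also have "\<dots> = (\<Sum>b\<in>out_nbrs E u. \<Sum>t\<in>in_nbrs E b. x (t, b))"
  proof (rule sum.cong)
    fix b assume "b \<in> out_nbrs E u"
    have "(\<Sum>t\<in>V. if b \<in> out_nbrs E t then x (t, b) else 0) = (\<Sum>t\<in>{t\<in>V. b \<in> out_nbrs E t}. x (t, b))"
      using finV by (simp add: sum.inter_filter)
    also have "{t\<in>V. b \<in> out_nbrs E t} = in_nbrs E b" using EV by (auto simp: out_nbrs_def in_nbrs_def)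
    finally show "(\<Sum>t\<in>V. if b \<in> out_nbrs E t then x (t, b) else 0) = (\<Sum>t\<in>in_nbrs E b. x (t, b))" .
  qed simp
  also have "\<dots> = (\<Sum>b\<in>out_nbrs E u. 1)"
    by (rule sum.cong) (use outV cols in auto)
  finally have sg: "(1/2 + eps) * real n \<le> (\<Sum>t\<in>V. g t)" using degs(1)[OF uV] by simp
  have K1: "real n < 2 * real (card {t\<in>V. eps \<le> f t})"
    by (rule count_lemma[OF finV cardV n0 eps(1)]) (use eps f1 sf in auto)
  have K2: "real n < 2 * real (card {t\<in>V. eps \<le> g t})"
    by (rule count_lemma[OF finV cardV n0 eps(1)]) (use eps g1 sg in auto)
  have "{t\<in>V. eps \<le> f t} \<inter> {t\<in>V. eps \<le> g t} \<noteq> {}"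
  proof
    assume emp: "{t\<in>V. eps \<le> f t} \<inter> {t\<in>V. eps \<le> g t} = {}"
    have "card ({t\<in>V. eps \<le> f t} \<union> {t\<in>V. eps \<le> g t}) \<le> n"
      using card_mono[OF finV] cardV by (metis (no_types, lifting) Un_least mem_Collect_eq subsetI)
    moreover have "card {t\<in>V. eps \<le> f t} + card {t\<in>V. eps \<le> g t} = card ({t\<in>V. eps \<le> f t} \<union> {t\<in>V. eps \<le> g t})"
      using card_Un_disjoint[OF _ _ emp] finV by simp
    ultimately show False using K1 K2 by linarith
  qed
  then obtain t where tV: "t \<in> V" and ft: "eps \<le> f t" and gt: "eps \<le> g t" by auto
  have inner: "x (u, w) * x (t, b) * f t \<le> x (v1, w) * x (u, b)"
    if b: "b \<in> out_nbrs E u" "b \<in> out_nbrs E t" for b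
  proof -
    have ub: "(u, b) \<in> E" and tb: "(t, b) \<in> E" using b by (auto simp: out_nbrs_def)
    have "x (u, w) * x (t, b) * f t = (\<Sum>c\<in>out_nbrs E v1. if c \<in> out_nbrs E t then x (u, w) * x (t, b) * x (v1, c) else 0)"
      unfolding f_def by (simp add: sum_if_mult mult.assoc)
    also have "\<dots> \<le> (\<Sum>c\<in>out_nbrs E v1. if c \<in> out_nbrs E t then x (v1, w) * x (u, b) * x (t, c) else 0)"
    proof (rule sum_mono)
      fix c assume c: "c \<in> out_nbrs E v1"
      show "(if c \<in> out_nbrs E t then x (u, w) * x (t, b) * x (v1, c) else 0) \<le> (if c \<in> out_nbrs E t then x (v1, w) * x (u, b) * x (t, c) else 0)"
      proof (cases "c \<in> out_nbrs E t")
        case True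
        have "x (u, w) * x (t, b) * x (v1, c) \<le> x (v1, w) * x (u, b) * x (t, c)"
          by (rule opt6'[OF finE px xmax vw uE ub tb]) (use True c in \<open>auto simp: out_nbrs_def\<close>)
        then show ?thesis using True by simp
      qed simp
    qed
    also have "\<dots> = x (v1, w) * x (u, b) * (\<Sum>c\<in>out_nbrs E v1. if c \<in> out_nbrs E t then x (t, c) else 0)"
      by (rule sum_if_mult[symmetric])
    also have "\<dots> \<le> x (v1, w) * x (u, b) * 1"
      by (rule mult_left_mono[OF row_part_le1[OF px finE tV finite_out[OF finE]]])
         (use xnn vw ub in simp)
    finally show ?thesis by simp
  qed
  have "x (u, w) * f t * g t = (\<Sum>b\<in>out_nbrs E u. if b \<in> out_nbrs E t then (x (u, w) * f t) * x (t, b) else 0)"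
    unfolding g_def by (rule sum_if_mult)
  also have "\<dots> = (\<Sum>b\<in>out_nbrs E u. if b \<in> out_nbrs E t then x (u, w) * x (t, b) * f t else 0)"
    by (rule sum.cong) (auto simp: algebra_simps)
  also have "\<dots> \<le> (\<Sum>b\<in>out_nbrs E u. x (v1, w) * x (u, b))"
    by (rule sum_mono) (use inner xnn vw in \<open>auto simp: out_nbrs_def\<close>)
  also have "\<dots> = x (v1, w)" using rows[OF uV] by (simp add: sum_distrib_left[symmetric])
  finally have A: "x (u, w) * f t * g t \<le> x (v1, w)" .
  have "eps ^ 2 / real n = (1 / real n) * eps * eps" by (simp add: power2_eq_square)
  also have "\<dots> \<le> x (u, w) * f t * g t"
    by (intro mult_mono xu ft gt) (use eps f0 xnn uE in auto)
  finally show ?thesis using A by linarith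
qed

end



lemma eps_small:
  assumes G: "n_eps_digraph n eps V E" and n: "n \<ge> 1"
  shows "eps < 1/2"
proof (rule ccontr)
  assume "\<not> eps < 1/2"
  then have e: "eps \<ge> 1/2" by simp
  have fin: "finite V" and EV: "E \<subseteq> V \<times> V" and noloop: "\<forall>v. (v, v) \<notin> E" and cV: "card V = n"
    using G by (auto simp: n_eps_digraph_def digraph_def)
  have "V \<noteq> {}" using cV n by auto
  then obtain v where v: "v \<in> V" by auto
  have sub: "out_nbrs E v \<subseteq> V - {v}" using EV noloop by (auto simp: out_nbrs_def)
  have "card (out_nbrs E v) \<le> card (V - {v})" by (rule card_mono[OF _ sub]) (use fin in simp)
  also have "\<dots> = n - 1" using cV v fin by simp
  finally have c: "real (card (out_nbrs E v)) \<le> real n - 1" using n by linarith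
  have "(1/2 + eps) * real n \<le> real (card (out_nbrs E v))" using G v by (auto simp: n_eps_digraph_def)
  moreover have "(1/2 + eps) * real n \<ge> 1 * real n" using e by (intro mult_right_mono) auto
  ultimately show False using c by linarith
qed

theorem theorem4p4:
  "\<forall>eps::real. 0 < eps \<and> eps \<le> 1 \<longrightarrow>
     (\<exists>b0::real. \<forall>b\<ge>b0. \<exists>n0::nat. \<forall>n\<ge>n0.
        \<forall>(V::nat set) E m.
          n_eps_digraph n eps V E \<longrightarrow> perfect_frac_matching V E m \<longrightarrow>
          entropy E m \<ge> real n * log 2 (real n / 2) + eps * real n \<longrightarrow>
          (\<exists>x. perfect_frac_matching V E x \<and> b_normal b V E x \<and>
               entropy E x \<ge> entropy E m - eps * real n))"
proof (intro allI impI)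
  fix eps :: real assume eps: "0 < eps \<and> eps \<le> 1"
  show "\<exists>b0::real. \<forall>b\<ge>b0. \<exists>n0::nat. \<forall>n\<ge>n0.
        \<forall>(V::nat set) E m.
          n_eps_digraph n eps V E \<longrightarrow> perfect_frac_matching V E m \<longrightarrow>
          entropy E m \<ge> real n * log 2 (real n / 2) + eps * real n \<longrightarrow>
          (\<exists>x. perfect_frac_matching V E x \<and> b_normal b V E x \<and>
               entropy E x \<ge> entropy E m - eps * real n)"
  proof (intro exI[of _ "1 / eps ^ 2"] allI impI exI[of _ "1::nat"])
    fix b :: real and n :: nat and V :: "nat set" and E m
    assume b: "1 / eps ^ 2 \<le> b" and n: "1 \<le> n" and G: "n_eps_digraph n eps V E"
      and pm: "perfect_frac_matching V E m"
    have e2: "eps < 1/2" by (rule eps_small[OF G n])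
    have fin: "finite V" and EV: "E \<subseteq> V \<times> V" and cV: "card V = n"
      using G by (auto simp: n_eps_digraph_def digraph_def)
    obtain x where px: "perfect_frac_matching V E x"
      and xmax: "\<forall>y. perfect_frac_matching V E y \<longrightarrow> entropy E y \<le> entropy E x"
      using exists_max[OF fin EV pm] by blast
    have xmax': "\<And>y. perfect_frac_matching V E y \<Longrightarrow> entropy E y \<le> entropy E x" using xmax by blast
    have e0: "0 < eps" using eps by simp
    have np: "real n > 0" using n by simp
    have bpos: "b > 0" using b e0 by (meson less_le_trans zero_less_divide_1_iff zero_less_power)
    have "b_normal b V E x"
      unfolding b_normal_def cV
    proof
      fix e assume eE: "e \<in> E"
      obtain v w where e: "e = (v, w)" by (cases e)
      have lo: "eps ^ 2 / real n \<le> x (v, w)" using lower[OF G e0 e2 px xmax'] eE e by simp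
      have up: "x (v, w) \<le> 1 / (2 * eps * real n)" using upper[OF G e0 e2 px xmax'] eE e by simp
      have "1 / (b * real n) \<le> eps ^ 2 / real n"
      proof -
        have "1 / b \<le> eps ^ 2" using b bpos e0 by (simp add: divide_le_eq mult.commute pos_divide_le_eq)
        then show ?thesis using np by (simp add: divide_right_mono field_simps)
      qed
      moreover have "1 / (2 * eps * real n) \<le> b / real n"
      proof -
        have "1 / (2 * eps) \<le> 1 / eps ^ 2" using e0 eps
          by (simp add: power2_eq_square frac_le field_simps mult_right_mono)
        then have "1 / (2 * eps) \<le> b" using b by linarith
        then show ?thesis using np by (simp add: divide_right_mono field_simps)
      qed
      ultimately show "1 / (b * real n) \<le> x e \<and> x e \<le> b / real n" using lo up e by simp
    qed
    moreover have "entropy E x \<ge> entropy E m - eps * real n"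
      using xmax pm e0 np by (smt (verit) mult_pos_pos)
    ultimately show "\<exists>x. perfect_frac_matching V E x \<and> b_normal b V E x \<and>
               entropy E x \<ge> entropy E m - eps * real n" using px by blast
  qed
qed

end
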